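(* Let $\eta$ be an ordinal with $\eta\in\mathcal{H}_\eta(\emptyset)$, and for any ordinal $\beta$ put $\hat\beta:=\eta+\omega^{\Omega+\beta}$. Then: (i) if $\alpha\in\mathcal{H}_\eta(\emptyset)$ then $\hat\alpha\in\mathcal{H}_{\hat\alpha}(\emptyset)$ and $\psi_\Omega(\hat\alpha)\in\mathcal{H}_{\hat\alpha}(\emptyset)$; (ii) if $\alpha_0\in\mathcal{H}_\eta(\emptyset)$ and $\alpha_0<\alpha$ then $\psi_\Omega(\hat{\alpha_0})<\psi_\Omega(\hat\alpha)$.
   Context: Let $\Omega$ be a big ordinal (e.g. $\aleph_1$), and $\varphi$ the binary Veblen function. By transfinite recursion on $\alpha$ define $B^\Omega(\alpha)$ as the closure of $\{0,\Omega\}$ under $+$, $(\xi,\eta)\mapsto\varphi\xi\eta$, and $\xi\mapsto\psi_\Omega(\xi)$ for $\xi<\alpha$; and $\psi_\Omega(\alpha):=\min\{\rho<\Omega:\rho\notin B^\Omega(\alpha)\}$. Let $\varepsilon_{\Omega+1}$ be the least $\eta>\Omega$ with $\omega^\eta=\eta$; all ordinals considered belong to $B^\Omega(\varepsilon_{\Omega+1})$. For each $\eta$ and each set $X$ of such ordinals, $\mathcal{H}_\eta(X):=\bigcap\{B^\Omega(\alpha): X\subseteq B^\Omega(\alpha)\text{ and }\eta<\alpha\}$. *)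

theory Defs
  imports "HOL-Library.Countable_Set"
begin

text \<open>Ordinals are modelled as the elements of a well-ordered type 'a
(element x represents the order type of its initial segment).
Ordinal arithmetic is defined by transfinite recursion along the order.\<close>

definition olt_rel :: "('a::wellorder \<times> 'a) set" where
  "olt_rel = {(x, y). x < y}"

definition ozero :: "'a::wellorder" where
  "ozero = (LEAST x. True)"

definition osucc :: "'a::wellorder \<Rightarrow> 'a" where
  "osucc x = (LEAST y. x < y)"

definition osup :: "'a::wellorder set \<Rightarrow> 'a" where
  "osup S = (LEAST y. \<forall>s\<in>S. s \<le> y)"

definition oone :: "'a::wellorder" where
  "oone = osucc ozero"

definition oomega :: "'a::wellorder" where
  "oomega = (LEAST x. ozero < x \<and> (\<forall>y<x. osucc y < x))"

definition oplus :: "'a::wellorder \<Rightarrow> 'a \<Rightarrow> 'a" where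
  "oplus a = wfrec olt_rel (\<lambda>f b. osup (insert a (osucc ` f ` {c. c < b})))"

definition omul :: "'a::wellorder \<Rightarrow> 'a \<Rightarrow> 'a" where
  "omul a = wfrec olt_rel (\<lambda>f b. osup ((\<lambda>c. oplus (f c) a) ` {c. c < b}))"

definition oexp :: "'a::wellorder \<Rightarrow> 'a \<Rightarrow> 'a" where
  "oexp a = wfrec olt_rel (\<lambda>f b. osup (insert oone ((\<lambda>c. omul (f c) a) ` {c. c < b})))"

definition oenum :: "('a::wellorder \<Rightarrow> bool) \<Rightarrow> 'a \<Rightarrow> 'a" where
  "oenum P = wfrec olt_rel (\<lambda>f b. LEAST x. P x \<and> (\<forall>c<b. f c < x))"

definition ophi :: "'a::wellorder \<Rightarrow> 'a \<Rightarrow> 'a" where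
  "ophi = wfrec olt_rel (\<lambda>f xi. if xi = ozero then oexp oomega
                                   else oenum (\<lambda>x. \<forall>z<xi. f z x = x))"

inductive_set Bcl :: "'a::wellorder \<Rightarrow> ('a \<Rightarrow> 'a) \<Rightarrow> 'a \<Rightarrow> 'a set"
  for Om :: 'a and g :: "'a \<Rightarrow> 'a" and alpha :: 'a where
  zero: "ozero \<in> Bcl Om g alpha"
| Om: "Om \<in> Bcl Om g alpha"
| plus: "x \<in> Bcl Om g alpha \<Longrightarrow> y \<in> Bcl Om g alpha \<Longrightarrow> oplus x y \<in> Bcl Om g alpha"
| phi: "x \<in> Bcl Om g alpha \<Longrightarrow> y \<in> Bcl Om g alpha \<Longrightarrow> ophi x y \<in> Bcl Om g alpha"
| psi: "xi \<in> Bcl Om g alpha \<Longrightarrow> xi < alpha \<Longrightarrow> g xi \<in> Bcl Om g alpha"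

definition opsi :: "'a::wellorder \<Rightarrow> 'a \<Rightarrow> 'a" where
  "opsi Om = wfrec olt_rel (\<lambda>f alpha. LEAST rho. rho < Om \<and> rho \<notin> Bcl Om f alpha)"

definition BOm :: "'a::wellorder \<Rightarrow> 'a \<Rightarrow> 'a set" where
  "BOm Om alpha = Bcl Om (opsi Om) alpha"

definition eps_succ :: "'a::wellorder \<Rightarrow> 'a" where
  "eps_succ Om = (LEAST e. Om < e \<and> oexp oomega e = e)"

definition HH :: "'a::wellorder \<Rightarrow> 'a \<Rightarrow> 'a set \<Rightarrow> 'a set" where
  "HH Om eta X = \<Inter> {BOm Om alpha | alpha. X \<subseteq> BOm Om alpha \<and> eta < alpha}"

definition is_omega1 :: "'a::wellorder \<Rightarrow> bool" where
  "is_omega1 Om \<longleftrightarrow> uncountable {x. x < Om} \<and> (\<forall>x<Om. countable {y. y < x})"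

definition omega2_universe :: "'a::wellorder \<Rightarrow> bool" where
  "omega2_universe Om \<longleftrightarrow>
     (\<forall>x::'a. \<exists>f. inj_on f {y. y < x} \<and> f ` {y. y < x} \<subseteq> {y. y < Om}) \<and>
     (\<forall>S::'a set. (\<exists>f. inj_on f S \<and> f ` S \<subseteq> {y. y < Om}) \<longrightarrow> (\<exists>b. \<forall>s\<in>S. s < b))"

end

theory Submission imports Defs begin

lemma wf_olt: "wf (olt_rel :: ('a::wellorder \<times> 'a) set)"
  unfolding olt_rel_def by (rule wf)

lemma cut_olt: "c < b \<Longrightarrow> cut f olt_rel b c = f c"
  by (simp add: cut_apply olt_rel_def)

lemma img_cut: "cut f olt_rel b ` {c. c < b} = f ` {c. c < b}"
  by (auto simp: cut_olt image_iff)

lemma oplus_unfold: "oplus a b = osup (insert a (osucc ` oplus a ` {c. c < b}))"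
  unfolding oplus_def by (subst wfrec[OF wf_olt]) (simp add: img_cut image_image cut_olt)

lemma omul_unfold: "omul a b = osup ((\<lambda>c. oplus (omul a c) a) ` {c. c < b})"
proof -
  have "omul a b = osup ((\<lambda>c. oplus (cut (omul a) olt_rel b c) a) ` {c. c < b})"
    unfolding omul_def by (subst wfrec[OF wf_olt]) simp
  also have "\<dots> = osup ((\<lambda>c. oplus (omul a c) a) ` {c. c < b})"
    by (rule arg_cong[where f=osup]) (auto simp: cut_olt image_iff)
  finally show ?thesis .
qed

lemma oexp_unfold: "oexp a b = osup (insert oone ((\<lambda>c. omul (oexp a c) a) ` {c. c < b}))"
proof -
  have "oexp a b = osup (insert oone ((\<lambda>c. omul (cut (oexp a) olt_rel b c) a) ` {c. c < b}))"
    unfolding oexp_def by (subst wfrec[OF wf_olt]) simp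
  also have "\<dots> = osup (insert oone ((\<lambda>c. omul (oexp a c) a) ` {c. c < b}))"
    by (rule arg_cong[where f=osup]) (auto simp: cut_olt image_iff)
  finally show ?thesis .
qed

lemma ophi_zero: "ophi ozero = oexp oomega"
  unfolding ophi_def by (subst wfrec[OF wf_olt]) simp

lemma ozero_le: "ozero \<le> (x::'a::wellorder)"
  unfolding ozero_def by (rule Least_le) simp

lemma Om_nonempty: "is_omega1 Om \<Longrightarrow> \<exists>x. x < Om"
proof (rule ccontr)
  assume o: "is_omega1 Om" and "\<not> (\<exists>x. x < Om)"
  hence e: "{x. x < Om} = {}" by auto
  have "uncountable {x. x < Om}" using o unfolding is_omega1_def by (rule conjunct1)
  thus False unfolding e using countable_empty by (rule notE)
qed

lemma o2_inj:
  assumes "omega2_universe (Om::'a::wellorder)"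
  shows "\<exists>f. inj_on f {y. y < (x::'a)} \<and> f ` {y. y < x} \<subseteq> {y. y < Om}"
proof -
  have "\<forall>x::'a. \<exists>f. inj_on f {y. y < x} \<and> f ` {y. y < x} \<subseteq> {y. y < Om}"
    using assms unfolding omega2_universe_def by (rule conjunct1)
  thus ?thesis by (rule spec[where x=x])
qed

lemma o2_bd:
  assumes "omega2_universe (Om::'a::wellorder)" "inj_on f (S::'a set)" "f ` S \<subseteq> {y. y < Om}"
  shows "\<exists>b. \<forall>s\<in>S. s < b"
proof -
  have "\<forall>S::'a set. (\<exists>f. inj_on f S \<and> f ` S \<subseteq> {y. y < Om}) \<longrightarrow> (\<exists>b. \<forall>s\<in>S. s < b)"
    using assms(1) unfolding omega2_universe_def by (rule conjunct2)
  hence "(\<exists>f. inj_on f S \<and> f ` S \<subseteq> {y. y < Om}) \<longrightarrow> (\<exists>b. \<forall>s\<in>S. s < b)" by (rule spec[where x=S])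
  moreover have "\<exists>f. inj_on f S \<and> f ` S \<subseteq> {y. y < Om}" using assms(2,3) by (intro exI conjI)
  ultimately show ?thesis by (rule mp)
qed

lemma bounded_img:
  fixes Om b :: "'a::wellorder" and g :: "'a \<Rightarrow> 'a"
  assumes "omega2_universe Om"
  shows "\<exists>y. \<forall>c<b. g c \<le> (y::'a::wellorder)"
proof -
  obtain f where f: "inj_on f {y. y < b}" "f ` {y. y < b} \<subseteq> {y. y < Om}"
    using o2_inj[OF assms, of b] by (elim exE conjE)
  let ?A = "{y. y < b}"
  let ?h = "f \<circ> inv_into ?A g"
  have sub: "inv_into ?A g ` (g ` ?A) \<subseteq> ?A"
    by (rule image_subsetI) (rule inv_into_into)
  have "inj_on ?h (g ` ?A)"
  proof (rule comp_inj_on)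
    show "inj_on (inv_into ?A g) (g ` ?A)" by (rule inj_on_inv_into) (rule subset_refl)
    show "inj_on f (inv_into ?A g ` g ` ?A)" by (rule inj_on_subset[OF f(1) sub])
  qed
  moreover have "?h ` (g ` ?A) \<subseteq> {y. y < Om}"
  proof -
    have "?h ` (g ` ?A) = f ` (inv_into ?A g ` (g ` ?A))" by (rule image_comp[symmetric])
    also have "\<dots> \<subseteq> f ` ?A" using sub by (rule image_mono)
    finally show ?thesis using f(2) by (rule subset_trans)
  qed
  ultimately obtain y where y: "\<forall>s\<in>g ` ?A. s < y"
    using o2_bd[OF assms] by blast
  have "\<forall>c<b. g c \<le> y"
  proof (intro allI impI)
    fix c assume cb: "c < b"
    hence "g c \<in> g ` ?A" by simp
    hence "g c < y" by (rule bspec[OF y])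
    thus "g c \<le> y" by (rule less_imp_le)
  qed
  thus ?thesis by (rule exI)
qed

lemma osup_ins:
  fixes Om b :: "'a::wellorder" and g :: "'a \<Rightarrow> 'a"
  assumes "omega2_universe Om"
  shows "a \<le> osup (insert a (g ` {c. c < b}))" "c < b \<Longrightarrow> g c \<le> osup (insert a (g ` {c. c < b}))"
proof -
  obtain y where y: "\<forall>c<b. g c \<le> y" using bounded_img[OF assms] by blast
  have ex: "\<exists>z. \<forall>s\<in>insert a (g ` {c. c < b}). s \<le> z"
    by (rule exI[of _ "max a y"]) (use y in \<open>auto simp: le_max_iff_disj\<close>)
  have "\<forall>s\<in>insert a (g ` {c. c < b}). s \<le> osup (insert a (g ` {c. c < b}))"
    unfolding osup_def by (rule LeastI_ex[OF ex])
  thus "a \<le> osup (insert a (g ` {c. c < b}))" "c < b \<Longrightarrow> g c \<le> osup (insert a (g ` {c. c < b}))"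
    by auto
qed

lemma osup_img:
  fixes Om b :: "'a::wellorder" and g :: "'a \<Rightarrow> 'a"
  assumes "omega2_universe Om" "c < b"
  shows "g c \<le> osup (g ` {c. c < b})"
proof -
  obtain y where y: "\<forall>c<b. g c \<le> y" using bounded_img[OF assms(1)] by blast
  have ex: "\<exists>z. \<forall>s\<in>g ` {c. c < b}. s \<le> z" using y by auto
  have "\<forall>s\<in>g ` {c. c < b}. s \<le> osup (g ` {c. c < b})"
    unfolding osup_def by (rule LeastI_ex[OF ex])
  thus ?thesis using assms(2) by auto
qed

lemma osucc_gt:
  fixes Om x :: "'a::wellorder"
  assumes "omega2_universe Om" "is_omega1 Om"
  shows "x < osucc x"
proof -
  obtain z where z: "z < Om" using Om_nonempty[OF assms(2)] by blast
  have "inj_on (\<lambda>_. z) {x}" "(\<lambda>_. z) ` {x} \<subseteq> {y. y < Om}" using z by auto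
  then obtain b where "\<forall>s\<in>{x}. s < b" using assms(1) unfolding omega2_universe_def by blast
  hence "\<exists>b. x < b" by auto
  thus ?thesis unfolding osucc_def by (rule LeastI_ex)
qed


context
  fixes Om :: "'a::wellorder"
  assumes O1: "is_omega1 Om" and O2: "omega2_universe Om"
begin

lemma oplus_ge_left: "(a::'a) \<le> oplus a b"
  using osup_ins(1)[OF O2, of a "osucc \<circ> oplus a" b]
  by (simp add: oplus_unfold[of a b] image_comp)

lemma oplus_step: "c < (b::'a) \<Longrightarrow> osucc (oplus a c) \<le> oplus a b"
  using osup_ins(2)[OF O2, of c b "osucc \<circ> oplus a" a]
  by (simp add: oplus_unfold[of a b] image_comp)

lemma oplus_mono: "c < (b::'a) \<Longrightarrow> oplus a c < oplus a b"
  using oplus_step osucc_gt[OF O2 O1] less_le_trans by blast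

lemma oplus_ge_right: "(b::'a) \<le> oplus a b"
proof (induction b rule: less_induct)
  case (less b)
  show ?case
  proof (rule ccontr)
    assume "\<not> b \<le> oplus a b"
    hence lt: "oplus a b < b" by (rule not_le_imp_less)
    hence "oplus a (oplus a b) < oplus a b" by (rule oplus_mono)
    moreover have "oplus a b \<le> oplus a (oplus a b)" using less.IH[OF lt] .
    ultimately show False by (meson leD)
  qed
qed

lemma oplus_pos: "ozero < (b::'a) \<Longrightarrow> a < oplus a b"
  using oplus_ge_left[of a ozero] oplus_mono[of ozero b a] by simp

lemma omul_step: "c < (b::'a) \<Longrightarrow> oplus (omul x c) x \<le> omul x b"
  using osup_img[OF O2, of c b "\<lambda>c. oplus (omul x c) x"]
  by (simp add: omul_unfold[of x b])

lemma oexp_one: "oone \<le> oexp a (b::'a)"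
  using osup_ins(1)[OF O2, of oone "\<lambda>c. omul (oexp a c) a" b]
  by (simp add: oexp_unfold[of a b])

lemma oexp_step: "c < (b::'a) \<Longrightarrow> omul (oexp a c) a \<le> oexp a b"
  using osup_ins(2)[OF O2, of c b "\<lambda>c. omul (oexp a c) a" oone]
  by (simp add: oexp_unfold[of a b])

lemma Om_limit: "ozero < Om \<and> (\<forall>y<Om. osucc y < Om)"
proof
  obtain z where "z < Om" using Om_nonempty[OF O1] by blast
  thus "ozero < Om" using ozero_le[of z] by simp
  show "\<forall>y<Om. osucc y < Om"
  proof (intro allI impI)
    fix y assume y: "y < Om"
    show "osucc y < Om"
    proof (rule ccontr)
      assume "\<not> osucc y < Om"
      hence "Om \<le> osucc y" by simp
      have "{x. x < Om} \<subseteq> insert y {x. x < y}"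
      proof
        fix x assume "x \<in> {x. x < Om}"
        hence "x < osucc y" using \<open>Om \<le> osucc y\<close> by auto
        moreover have "y < x \<Longrightarrow> osucc y \<le> x" unfolding osucc_def by (rule Least_le)
        ultimately show "x \<in> insert y {x. x < y}" by (auto simp: not_less_iff_gr_or_eq)
      qed
      moreover have "countable (insert y {x. x < y})" using O1 y unfolding is_omega1_def by simp
      ultimately show False using O1 unfolding is_omega1_def by (metis countable_subset)
    qed
  qed
qed

lemma omega_prop: "ozero < (oomega::'a) \<and> (\<forall>y<oomega. osucc y < (oomega::'a))"
  unfolding oomega_def by (rule LeastI[of "\<lambda>x. ozero < x \<and> (\<forall>y<x. osucc y < x)" Om, OF Om_limit])

lemma zero_lt_one: "ozero < (oone::'a)"
  unfolding oone_def by (rule osucc_gt[OF O2 O1])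

lemma one_lt_omega: "oone < (oomega::'a)"
  unfolding oone_def using omega_prop by blast

lemma omul_gt: "ozero < x \<Longrightarrow> x < omul x (oomega::'a)"
proof -
  assume x: "ozero < x"
  have "x \<le> oplus (omul x ozero) x" by (rule oplus_ge_right)
  also have "\<dots> \<le> omul x oone" by (rule omul_step[OF zero_lt_one])
  also have "\<dots> < oplus (omul x oone) x" by (rule oplus_pos[OF x])
  also have "\<dots> \<le> omul x oomega" by (rule omul_step[OF one_lt_omega])
  finally show ?thesis .
qed

lemma oexp_mono: "c < b \<Longrightarrow> oexp oomega c < oexp (oomega::'a) b"
proof -
  assume cb: "c < b"
  have "ozero < oexp oomega c" using zero_lt_one oexp_one[of oomega c] by simp
  hence "oexp oomega c < omul (oexp oomega c) oomega" by (rule omul_gt)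
  also have "\<dots> \<le> oexp oomega b" by (rule oexp_step[OF cb])
  finally show ?thesis .
qed

end

fun lev :: "'a::wellorder \<Rightarrow> ('a \<Rightarrow> 'a) \<Rightarrow> 'a \<Rightarrow> nat \<Rightarrow> 'a set" where
  "lev Om g al 0 = {ozero, Om}"
| "lev Om g al (Suc n) = lev Om g al n \<union> (case_prod oplus) ` (lev Om g al n \<times> lev Om g al n)
     \<union> (case_prod ophi) ` (lev Om g al n \<times> lev Om g al n) \<union> g ` (lev Om g al n \<inter> {x. x < al})"

lemma lev_mono: "m \<le> n \<Longrightarrow> lev Om g al m \<subseteq> lev Om g al n"
  by (rule lift_Suc_mono_le[of "lev Om g al"]) auto

lemma lev_countable: "countable (lev Om g al n)"
  by (induction n) auto

lemma Bcl_sub_lev: "x \<in> Bcl Om g al \<Longrightarrow> \<exists>n. x \<in> lev Om g al n"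
proof (induction rule: Bcl.induct)
  case zero
  then show ?case by (metis insertI1 lev.simps(1))
next
  case Om
  then show ?case by (metis insertI1 insertI2 lev.simps(1))
next
  case (plus x y)
  then obtain m n where "x \<in> lev Om g al m" "y \<in> lev Om g al n" by blast
  hence "x \<in> lev Om g al (max m n)" "y \<in> lev Om g al (max m n)"
    using lev_mono[of m "max m n" Om g al] lev_mono[of n "max m n" Om g al] by auto
  hence "oplus x y \<in> lev Om g al (Suc (max m n))" by auto
  thus ?case by blast
next
  case (phi x y)
  then obtain m n where "x \<in> lev Om g al m" "y \<in> lev Om g al n" by blast
  hence "x \<in> lev Om g al (max m n)" "y \<in> lev Om g al (max m n)"
    using lev_mono[of m "max m n" Om g al] lev_mono[of n "max m n" Om g al] by auto
  hence "ophi x y \<in> lev Om g al (Suc (max m n))" by auto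
  thus ?case by blast
next
  case (psi xi)
  then obtain n where "xi \<in> lev Om g al n" by blast
  hence "g xi \<in> lev Om g al (Suc n)" using psi by auto
  thus ?case by blast
qed

lemma Bcl_countable: "countable (Bcl Om g al)"
proof -
  have "Bcl Om g al \<subseteq> (\<Union>n. lev Om g al n)"
  proof
    fix x assume x: "x \<in> Bcl Om g al"
    obtain n where "x \<in> lev Om g al n" using Bcl_sub_lev[OF x] by blast
    thus "x \<in> (\<Union>n. lev Om g al n)" by (rule UN_I[OF UNIV_I])
  qed
  moreover have "countable (\<Union>n. lev Om g al n)"
    by (simp add: lev_countable)
  ultimately show ?thesis by (rule countable_subset)
qed

lemma Bcl_cong:
  assumes eq: "\<And>xi. xi < al \<Longrightarrow> g xi = g' xi" and x: "x \<in> Bcl Om g al"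
  shows "x \<in> Bcl Om g' al"
  using x
proof (induction rule: Bcl.induct)
  case (psi xi)
  have "g xi = g' xi" using psi(2) by (rule eq)
  moreover have "g' xi \<in> Bcl Om g' al" using psi(3) psi(2) by (rule Bcl.psi)
  ultimately show ?case by simp
qed (auto intro: Bcl.intros)

lemma opsi_eq: "opsi Om al = (LEAST rho. rho < Om \<and> rho \<notin> BOm Om al)"
proof -
  have "Bcl Om (cut (opsi Om) olt_rel al) al = Bcl Om (opsi Om) al"
  proof
    show "Bcl Om (cut (opsi Om) olt_rel al) al \<subseteq> Bcl Om (opsi Om) al"
    proof
      fix x assume "x \<in> Bcl Om (cut (opsi Om) olt_rel al) al"
      thus "x \<in> Bcl Om (opsi Om) al" by (rule Bcl_cong[rotated]) (rule cut_olt)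
    qed
    show "Bcl Om (opsi Om) al \<subseteq> Bcl Om (cut (opsi Om) olt_rel al) al"
    proof
      fix x assume "x \<in> Bcl Om (opsi Om) al"
      thus "x \<in> Bcl Om (cut (opsi Om) olt_rel al) al" by (rule Bcl_cong[rotated]) (rule cut_olt[symmetric])
    qed
  qed
  thus ?thesis unfolding BOm_def by (subst opsi_def, subst wfrec[OF wf_olt]) (simp add: opsi_def)
qed

lemma BOm_mono: "x \<in> BOm Om al \<Longrightarrow> al \<le> be \<Longrightarrow> x \<in> BOm Om be"
  unfolding BOm_def
proof (induction rule: Bcl.induct)
  case (psi xi)
  then show ?case by (meson Bcl.psi less_le_trans)
qed (auto intro: Bcl.intros)

lemma opsi_props:
  assumes "is_omega1 Om"
  shows "opsi Om al < Om \<and> opsi Om al \<notin> BOm Om al"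
proof -
  have "\<exists>rho. rho < Om \<and> rho \<notin> BOm Om al"
  proof (rule ccontr)
    assume "\<not> ?thesis"
    hence "{x. x < Om} \<subseteq> BOm Om al" by auto
    hence "countable {x. x < Om}" unfolding BOm_def by (rule countable_subset) (rule Bcl_countable)
    thus False using assms unfolding is_omega1_def by simp
  qed
  thus ?thesis unfolding opsi_eq by (rule LeastI_ex)
qed

lemma opsi_le: "rho < Om \<Longrightarrow> rho \<notin> BOm Om al \<Longrightarrow> opsi Om al \<le> rho"
  unfolding opsi_eq by (rule Least_le) simp

lemma HH_mem: "x \<in> HH Om e {} \<longleftrightarrow> (\<forall>g. e < g \<longrightarrow> x \<in> BOm Om g)"
  unfolding HH_def by auto

theorem lemma2p20:
  fixes Om eta :: "'a::wellorder"
  assumes "is_omega1 Om" and "omega2_universe Om"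
    and "eta \<in> BOm Om (eps_succ Om)"
    and "eta \<in> HH Om eta {}"
  defines "hat \<equiv> (\<lambda>beta. oplus eta (oexp oomega (oplus Om beta)))"
  shows "(\<forall>alpha. alpha \<in> BOm Om (eps_succ Om) \<and> alpha \<in> HH Om eta {} \<longrightarrow>
            hat alpha \<in> HH Om (hat alpha) {} \<and> opsi Om (hat alpha) \<in> HH Om (hat alpha) {})
       \<and> (\<forall>alpha0 alpha. alpha0 \<in> BOm Om (eps_succ Om) \<and> alpha \<in> BOm Om (eps_succ Om)
            \<and> alpha0 \<in> HH Om eta {} \<and> alpha0 < alpha \<longrightarrow>
            opsi Om (hat alpha0) < opsi Om (hat alpha))"
proof -
  have P1: "hat alpha \<in> HH Om (hat alpha) {} \<and> opsi Om (hat alpha) \<in> HH Om (hat alpha) {}"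
    if al: "alpha \<in> HH Om eta {}" for alpha
  proof -
    have A: "hat alpha \<in> BOm Om g" if g: "hat alpha < g" for g
    proof -
      have "eta \<le> hat alpha" unfolding hat_def by (rule oplus_ge_left[OF assms(1,2)])
      hence eg: "eta < g" using g by simp
      have e: "eta \<in> BOm Om g" using assms(4) eg unfolding HH_mem by simp
      have a: "alpha \<in> BOm Om g" using al eg unfolding HH_mem by simp
      have "oplus Om alpha \<in> BOm Om g" using a unfolding BOm_def by (rule Bcl.plus[OF Bcl.Om])
      hence "ophi ozero (oplus Om alpha) \<in> BOm Om g" unfolding BOm_def by (rule Bcl.phi[OF Bcl.zero])
      hence "oexp oomega (oplus Om alpha) \<in> BOm Om g" by (simp add: ophi_zero)
      hence "oplus eta (oexp oomega (oplus Om alpha)) \<in> BOm Om g" using e unfolding BOm_def by (rule Bcl.plus[rotated])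
      thus ?thesis unfolding hat_def .
    qed
    have B: "opsi Om (hat alpha) \<in> BOm Om g" if g: "hat alpha < g" for g
      using A[OF g] g unfolding BOm_def by (rule Bcl.psi)
    show ?thesis unfolding HH_mem using A B by simp
  qed
  have P2: "opsi Om (hat alpha0) < opsi Om (hat alpha)"
    if a0: "alpha0 \<in> HH Om eta {}" and lt: "alpha0 < alpha" for alpha0 alpha
  proof -
    have hlt: "hat alpha0 < hat alpha" unfolding hat_def
      by (rule oplus_mono[OF assms(1,2)], rule oexp_mono[OF assms(1,2)], rule oplus_mono[OF assms(1,2)], rule lt)
    have h0: "hat alpha0 \<in> BOm Om (hat alpha)" using P1[OF a0] hlt unfolding HH_mem by simp
    have "opsi Om (hat alpha0) \<in> BOm Om (hat alpha)"
      using h0 hlt unfolding BOm_def by (rule Bcl.psi)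
    moreover have pa: "opsi Om (hat alpha) < Om" "opsi Om (hat alpha) \<notin> BOm Om (hat alpha)"
      using opsi_props[OF assms(1)] by auto
    ultimately have ne: "opsi Om (hat alpha0) \<noteq> opsi Om (hat alpha)" by auto
    have "opsi Om (hat alpha) \<notin> BOm Om (hat alpha0)"
      using pa(2) BOm_mono[of _ Om "hat alpha0" "hat alpha"] hlt by (meson less_imp_le)
    hence "opsi Om (hat alpha0) \<le> opsi Om (hat alpha)" using pa(1) by (rule opsi_le[rotated])
    thus ?thesis using ne by simp
  qed
  show ?thesis using P1 P2 by auto
qed

end
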